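(* (i) Let $q$ be a power of an odd prime and let $\mathfrak{C}/\mathbb{F}_q$ be the genus $2$ hyperelliptic curve $y^2=x^5+x^3+tx$ with $t\in\mathbb{F}_q\setminus\{0,1/4,9/100\}$. If $4\mid q-1$ and $t$ has a fourth root $t^{1/4}\in\mathbb{F}_q$, then $\mathrm{Aut}(\mathfrak{C}/\mathbb{F}_q)\simeq D_8$. (ii) Let $q$ be a power of an odd prime $p\neq 3$ and let $\mathfrak{C}/\mathbb{F}_q$ be the genus $2$ hyperelliptic curve $y^2=x^6+x^3+t$ with $t\in\mathbb{F}_q\setminus\{0,1/4,-1/50\}$. If $3\mid q-1$ and $t$ has a sixth root $t^{1/6}\in\mathbb{F}_q$, then $\mathrm{Aut}(\mathfrak{C}/\mathbb{F}_q)\simeq D_{12}$.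
   Context: For a genus $2$ curve $\mathfrak{C}:y^2=f(x)$ over $\mathbb{F}_q$ ($q$ odd), automorphisms of $\mathfrak{C}$ over $\overline{\mathbb{F}}_q$ correspond to matrices $M=\begin{pmatrix}a&b\\c&d\end{pmatrix}\in\mathrm{GL}_2(\overline{\mathbb{F}}_q)$ acting by $x\mapsto \frac{ax+b}{cx+d}$, $y\mapsto \frac{(ad-bc)y}{(cx+d)^3}$ (and preserving the curve). $\mathrm{Aut}(\mathfrak{C})$ denotes the full automorphism group over $\overline{\mathbb{F}}_q$ (including the hyperelliptic involution $y\mapsto -y$, corresponding to $-I$), and $\mathrm{Aut}(\mathfrak{C}/\mathbb{F}_q)$ its subgroup of automorphisms defined over $\mathbb{F}_q$, i.e. whose matrix has entries in $\mathbb{F}_q$. $D_n$ denotes the dihedral group of order $n$. *)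

theory Defs
  imports "HOL-Library.Cardinality" "HOL-Algebra.Group" "HOL-Computational_Algebra.Polynomial"
begin

text \<open>A 2x2 matrix (a b; c d) is represented as the tuple (a, b, c, d).\<close>
type_synonym 'a mat2 = "'a \<times> 'a \<times> 'a \<times> 'a"

fun mat2_det :: "'a::comm_ring_1 mat2 \<Rightarrow> 'a" where
  "mat2_det (a, b, c, d) = a * d - b * c"

fun mat2_mult :: "'a::comm_ring_1 mat2 \<Rightarrow> 'a mat2 \<Rightarrow> 'a mat2" where
  "mat2_mult (a, b, c, d) (a', b', c', d') =
     (a * a' + b * c', a * b' + b * d', c * a' + d * c', c * b' + d * d')"

text \<open>The matrix M = (a b; c d) defines an automorphism
  x \<mapsto> (ax+b)/(cx+d), y \<mapsto> (ad-bc) y/(cx+d)^3 of the genus 2 curve y^2 = f(x)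
  (deg f \<le> 6) iff  (cx+d)^6 f((ax+b)/(cx+d)) = (ad-bc)^2 f(x) as polynomials, i.e.
  sum_i f_i (ax+b)^i (cx+d)^(6-i) = (ad-bc)^2 f(x).\<close>
fun preserves_curve :: "'a::field poly \<Rightarrow> 'a mat2 \<Rightarrow> bool" where
  "preserves_curve f (a, b, c, d) =
     ((\<Sum>i\<le>6. smult (coeff f i) ([:b, a:] ^ i * [:d, c:] ^ (6 - i)))
        = smult ((a * d - b * c) ^ 2) f)"

definition aut_group :: "'a::field poly \<Rightarrow> 'a mat2 monoid" where
  "aut_group f = \<lparr> carrier = {M. mat2_det M \<noteq> 0 \<and> preserves_curve f M},
                  monoid.mult = mat2_mult, one = (1, 0, 0, 1) \<rparr>"

text \<open>Dihedral group of order n (n even): elements (k, s) stand for r^k s^s,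
  with r a rotation of order n/2 and s a reflection.\<close>
definition dihedral_group :: "nat \<Rightarrow> (nat \<times> bool) monoid" where
  "dihedral_group n = \<lparr> carrier = {(k, s). k < n div 2},
     monoid.mult = (\<lambda>(k1, s1) (k2, s2).
              ((if s1 then k1 + (n div 2) - k2 else k1 + k2) mod (n div 2), s1 \<noteq> s2)),
     one = (0, False) \<rparr>"

end

theory Submission
  imports Defs "HOL-Number_Theory.Residues"
begin

lemma nz_mult: "(x::'a::field) \<noteq> 0 \<Longrightarrow> y \<noteq> 0 \<Longrightarrow> x*y \<noteq> 0" by simp

lemma core1:
  fixes r l t :: "'a::field"
  assumes r0: "r \<noteq> 0" and lr: "l \<noteq> r" and two: "(2::'a) \<noteq> 0"
    and t1: "4*t - 1 \<noteq> 0" and t2: "100*t - 9 \<noteq> 0"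
    and Q6: "r^5 + r^3 + r*t = 0"
    and Q4: "5*r^4*l + 10*r^3*l^2 + 3*r^3 + 9*r^2*l + 3*r*l^2 + 10*r*t + 5*l*t = 0"
    and Q2: "10*r^2*l^3 + 3*r^2*l + 5*r*l^4 + 9*r*l^2 + 5*r*t + 3*l^3 + 10*l*t = 0"
    and Q0: "l^5 + l^3 + l*t = 0"
  shows False
proof -
  have T: "t = -(r^4) - r^2"
  proof -
    have "r * (r^4 + r^2 + t) = 0" using Q6 by Groebner_Basis.algebra
    with r0 have "r^4 + r^2 + t = 0" by simp
    thus ?thesis by (simp add: algebra_simps eq_neg_iff_add_eq_0)
  qed
  have "r * (l - r) * ((10*r^2+3)*l + r*(10*r^2+7)) = 0"
    using Q4 T by Groebner_Basis.algebra
  with r0 lr have Kl: "(10*r^2+3)*l = - r*(10*r^2+7)"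
    by (simp add: eq_neg_iff_add_eq_0)
  show False
  proof (cases "(5::'a) = 0")
    case True
    have "3*(l-r) = ((10*r^2+3)*l + r*(10*r^2+7)) - 2*5*(r^2*l+r^3+r)" by Groebner_Basis.algebra
    hence "3*(l-r) = 0" using Kl True by simp
    with lr have "(3::'a) = 0" by simp
    moreover have "(1::'a) = 2*5 - 3*3" by simp
    ultimately have "(1::'a) = 0" using True by simp
    thus False by simp
  next
    case False
    have p1: "200*r^3*(4000*r^10+9200*r^8+7760*r^6+2968*r^4+498*r^2+27) = 0"
    proof -
      have "(10*r^2+3)^5 * (10*r^2*l^3 + 3*r^2*l + 5*r*l^4 + 9*r*l^2 + 5*r*t + 3*l^3 + 10*l*t) = 200*r^3*(4000*r^10+9200*r^8+7760*r^6+2968*r^4+498*r^2+27) + ((10*r^2+3)*l + r*(10*r^2+7)) * (- 50000*r^12 - 50000*r^11*l + 50000*r^10*l^2 - 170000*r^10 + 50000*r^9*l^3 + 70000*r^8*l^2 - 185000*r^8 + 60000*r^7*l^3 + 41000*r^7*l + 45000*r^6*l^2 - 84200*r^6 + 27000*r^5*l^3 + 21000*r^5*l + 16200*r^4*l^2 - 15945*r^4 + 5400*r^3*l^3 + 3555*r^3*l + 3105*r^2*l^2 - 945*r^2 + 405*r*l^3 + 162*r*l + 243*l^2)"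
        unfolding T by Groebner_Basis.algebra
      thus ?thesis using Q2 Kl by simp
    qed
    have p2: "40*r^3*(4000*r^10+10800*r^8+10960*r^6+5112*r^4+1042*r^2+63) = 0"
    proof -
      have "(10*r^2+3)^5 * (l^5 + l^3 + l*t) = - 40*r^3*(4000*r^10+10800*r^8+10960*r^6+5112*r^4+1042*r^2+63) + ((10*r^2+3)*l + r*(10*r^2+7)) * (- 10000*r^11*l + 10000*r^10*l^2 + 16000*r^10 - 10000*r^9*l^3 - 34000*r^9*l + 10000*r^8*l^4 + 30000*r^8*l^2 + 32000*r^8 - 16000*r^7*l^3 - 37000*r^7*l + 12000*r^6*l^4 + 26200*r^6*l^2 + 21440*r^6 - 9000*r^5*l^3 - 16840*r^5*l + 5400*r^4*l^4 + 9600*r^4*l^2 + 5440*r^4 - 2160*r^3*l^3 - 3189*r^3*l + 1080*r^2*l^4 + 1521*r^2*l^2 + 360*r^2 - 189*r*l^3 - 189*r*l + 81*l^4 + 81*l^2)"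
        unfolding T by Groebner_Basis.algebra
      thus ?thesis using Q0 Kl by simp
    qed
    have n200: "(200::'a) \<noteq> 0"
    proof -
      have "(2::'a)*2*2*5*5 \<noteq> 0" by (intro nz_mult two False)
      thus ?thesis by simp
    qed
    have n40: "(40::'a) \<noteq> 0"
    proof -
      have "(2::'a)*2*2*5 \<noteq> 0" by (intro nz_mult two False)
      thus ?thesis by simp
    qed
    from p1 n200 r0 have P1: "4000*r^10+9200*r^8+7760*r^6+2968*r^4+498*r^2+27 = (0::'a)" by simp
    from p2 n40 r0 have P2: "4000*r^10+10800*r^8+10960*r^6+5112*r^4+1042*r^2+63 = (0::'a)" by simp
    have "4*((4*t - 1)*(100*t - 9)) = 0" using P1 P2 T by Groebner_Basis.algebra
    moreover have "(2::'a)*2 \<noteq> 0" by (intro nz_mult two)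
    ultimately have "(4*t - 1)*(100*t - 9) = 0" by simp
    with t1 t2 show False by simp
  qed
qed

lemma zc: "(c::'a::field) * x = 0 \<Longrightarrow> c \<noteq> 0 \<Longrightarrow> x = 0" by simp

lemma core2:
  fixes r l t :: "'a::field"
  assumes r0: "r \<noteq> 0" and lr: "l \<noteq> r" and two: "(2::'a) \<noteq> 0" and three: "(3::'a) \<noteq> 0"
    and t1: "4*t - 1 \<noteq> 0" and t2: "50*t + 1 \<noteq> 0"
    and F5: "6*r^5*l + 3*r^3 + 3*r^2*l + 6*t = 0"
    and F4: "15*r^4*l^2 + 3*r^3 + 9*r^2*l + 3*r*l^2 + 15*t = 0"
    and F2: "15*r^2*l^4 + 3*r^2*l + 9*r*l^2 + 3*l^3 + 15*t = 0"
    and F1: "6*r*l^5 + 3*r*l^2 + 3*l^3 + 6*t = 0"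
  shows False
proof -
  have "3*(2*t + (2*r^5*l + r^3 + r^2*l)) = 0" using F5 by Groebner_Basis.algebra
  hence T: "2*t + (2*r^5*l + r^3 + r^2*l) = 0" using three by (rule zc)
  have "2*(15*r^4*l^2 + 3*r^3 + 9*r^2*l + 3*r*l^2 + 15*t)
      = 3*((l-r)*r*((10*r^3+2)*l + 3*r)) + 15*(2*t + (2*r^5*l + r^3 + r^2*l))" by Groebner_Basis.algebra
  hence "3*((l-r)*r*((10*r^3+2)*l + 3*r)) = 0" using F4 T by simp
  with three r0 lr have Kl: "(10*r^3+2)*l + 3*r = 0" by simp
  have "2*(15*r^2*l^4 + 3*r^2*l + 9*r*l^2 + 3*l^3 + 15*t)
      = 3*((l-r)*(10*l^3*r^2 + 10*l^2*r^3 + 2*l^2 + 10*l*r^4 + 8*l*r + 5*r^2))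
        + 15*(2*t + (2*r^5*l + r^3 + r^2*l))" by Groebner_Basis.algebra
  hence "3*((l-r)*(10*l^3*r^2 + 10*l^2*r^3 + 2*l^2 + 10*l*r^4 + 8*l*r + 5*r^2)) = 0"
    using F2 T by simp
  with three lr have B1: "10*l^3*r^2 + 10*l^2*r^3 + 2*l^2 + 10*l*r^4 + 8*l*r + 5*r^2 = 0" by simp
  have "6*r*l^5 + 3*r*l^2 + 3*l^3 + 6*t
      = 3*((l-r)*(2*l^4*r + 2*l^3*r^2 + 2*l^2*r^3 + l^2 + 2*l*r^4 + 2*l*r + r^2))
        + 3*(2*t + (2*r^5*l + r^3 + r^2*l))" by Groebner_Basis.algebra
  hence "3*((l-r)*(2*l^4*r + 2*l^3*r^2 + 2*l^2*r^3 + l^2 + 2*l*r^4 + 2*l*r + r^2)) = 0"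
    using F1 T by simp
  with three lr have C1: "2*l^4*r + 2*l^3*r^2 + 2*l^2*r^3 + l^2 + 2*l*r^4 + 2*l*r + r^2 = 0" by simp
  have "2*r^3*(10*l^3*r^2 + 10*l^2*r^3 + 2*l^2 + 10*l*r^4 + 8*l*r + 5*r^2)*(10*r^3+2)^3
       - (2*l^4*r + 2*l^3*r^2 + 2*l^2*r^3 + l^2 + 2*l*r^4 + 2*l*r + r^2)*(10*r^3+2)^4
       = 2*r^2*(200*r^9+30*r^6-39*r^3-2) + ((10*r^3+2)*l + 3*r) *
         (- 2000*r^10*l^3 - 800*r^10 - 1000*r^9*l + 200*r^8*l^2 - 1200*r^7*l^3 - 420*r^7 - 660*r^6*l + 80*r^5*l^2 - 240*r^4*l^3 - 54*r^4 - 132*r^3*l + 8*r^2*l^2 - 16*r*l^3 - 4*r - 8*l)"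
    by Groebner_Basis.algebra
  hence "2*r^2*(200*r^9+30*r^6-39*r^3-2) = 0" using B1 C1 Kl by simp
  hence cub: "200*r^9+30*r^6-39*r^3-2 = 0" using two r0 by (metis zc mult_eq_0_iff power_not_zero)
  have e1: "(4*t-1)*(10*r^3+2) + 2*(2*r^3+1)^2
      = 2*(10*r^3+2)*(2*t + (2*r^5*l + r^3 + r^2*l)) + ((10*r^3+2)*l + 3*r)*(- 4*r^5 - 2*r^2)"
    by Groebner_Basis.algebra
  have e2: "(50*t+1)*2*(10*r^3+2) + 2*(100*r^6-35*r^3-2)
      = 50*(10*r^3+2)*(2*t + (2*r^5*l + r^3 + r^2*l)) + ((10*r^3+2)*l + 3*r)*(- 100*r^5 - 50*r^2)"
    by Groebner_Basis.algebra
  from e1 T Kl have E1: "(4*t-1)*(10*r^3+2) + 2*(2*r^3+1)^2 = 0" by simp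
  from e2 T Kl have E2: "(50*t+1)*2*(10*r^3+2) + 2*(100*r^6-35*r^3-2) = 0" by simp
  have "(4*t-1)*((50*t+1)*2*(10*r^3+2))*(10*r^3+2) = 4*(2*r^3+1)*(200*r^9+30*r^6-39*r^3-2)"
    using E1 E2 by Groebner_Basis.algebra
  hence "(4*t-1)*((50*t+1)*2*(10*r^3+2))*(10*r^3+2) = 0" using cub by simp
  with t1 t2 two have K0: "10*r^3+2 = 0" by (metis mult_eq_0_iff)
  with Kl have "3*r = 0" by simp
  with three r0 show False by simp
qed

lemma pow_mod_eq:
  fixes z :: "'a::comm_ring_1"
  assumes "z^m = 1"
  shows "z^(n mod m) = z^n"
proof -
  have "(z^m)^(n div m) * z^(n mod m) = z^(m*(n div m) + n mod m)" by (simp only: power_add power_mult)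
  also have "m*(n div m) + n mod m = n" by simp
  finally show ?thesis using assms by simp
qed

lemma roots_unity:
  fixes z a :: "'a::field"
  assumes m: "0 < m" and z: "z^m = 1" and prim: "\<And>k. 0 < k \<Longrightarrow> k < m \<Longrightarrow> z^k \<noteq> 1"
    and a: "a^m = 1"
  shows "\<exists>k<m. a = z^k"
proof -
  define p :: "'a poly" where "p = Polynomial.monom 1 m + [:-1:]"
  have pa: "poly p x = x^m - 1" for x by (simp add: p_def poly_monom)
  have dp: "degree p = m" using m unfolding p_def
    by (subst degree_add_eq_left) (simp_all add: degree_monom_eq)
  have p0: "p \<noteq> 0" using dp m by auto
  have S: "{x. poly p x = 0} = {x. x^m = 1}" by (auto simp: pa)
  have cS: "card {x. x^m = (1::'a)} \<le> m"
    using card_poly_roots_bound[OF p0] dp S by simp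
  have fin: "finite {x. x^m = (1::'a)}"
    using poly_roots_finite[OF p0] S by simp
  have inj: "inj_on (\<lambda>k. z^k) {..<m}"
  proof (rule inj_onI)
    fix i j assume i: "i \<in> {..<m}" and j: "j \<in> {..<m}" and eq: "z^i = z^j"
    have z0: "z \<noteq> 0" using z m by (metis power_0_left zero_neq_one neq0_conv)
    show "i = j"
    proof (rule ccontr)
      assume ne: "i \<noteq> j"
      show False
      proof (cases "i < j")
        case True
        have "z^j = z^i * z^(j-i)" using True by (simp add: power_add[symmetric])
        hence "z^(j-i) = 1" using eq z0 by simp
        moreover have "0 < j - i" "j - i < m" using True j by auto
        ultimately show False using prim by blast
      next
        case False
        hence ji: "j < i" using ne by simp
        have "z^i = z^j * z^(i-j)" using ji by (simp add: power_add[symmetric])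
        hence "z^(i-j) = 1" using eq z0 by simp
        moreover have "0 < i - j" "i - j < m" using ji i by auto
        ultimately show False using prim by blast
      qed
    qed
  qed
  have sub: "(\<lambda>k. z^k) ` {..<m} \<subseteq> {x. x^m = 1}"
  proof (rule image_subsetI)
    fix k
    have "(z^k)^m = (z^m)^k" by (metis power_mult mult.commute)
    thus "z^k \<in> {x. x^m = 1}" using z by simp
  qed
  have "card ((\<lambda>k. z^k) ` {..<m}) = m" using card_image[OF inj] by simp
  hence "(\<lambda>k. z^k) ` {..<m} = {x. x^m = 1}"
    using card_subset_eq[OF fin sub] cS card_mono[OF fin sub] by simp
  thus ?thesis using a by auto
qed

lemma iso_sym_closed:
  assumes h: "h \<in> iso G H"
    and cl: "\<And>x y. x \<in> carrier G \<Longrightarrow> y \<in> carrier G \<Longrightarrow> x \<otimes>\<^bsub>G\<^esub> y \<in> carrier G"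
  shows "H \<cong> G"
proof -
  have h: "h \<in> hom G H" "bij_betw h (carrier G) (carrier H)"
    using h by (auto simp add: iso_def)
  then have HG: "bij_betw (inv_into (carrier G) h) (carrier H) (carrier G)"
    by (simp add: bij_betw_inv_into)
  have *: "\<And>x. x \<in> carrier H \<Longrightarrow> inv_into (carrier G) h x \<in> carrier G"
    by (meson HG bij_betwE)
  have "inv_into (carrier G) h \<in> hom H G"
  proof (rule homI)
    show "\<And>x. x \<in> carrier H \<Longrightarrow> inv_into (carrier G) h x \<in> carrier G" by (rule *)
    show "inv_into (carrier G) h (x \<otimes>\<^bsub>H\<^esub> y) = inv_into (carrier G) h x \<otimes>\<^bsub>G\<^esub> inv_into (carrier G) h y"
      if "x \<in> carrier H" "y \<in> carrier H" for x y
    proof (rule inv_into_f_eq)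
      show "inj_on h (carrier G)"
        using bij_betw_def h(2) by blast
      show "inv_into (carrier G) h x \<otimes>\<^bsub>G\<^esub> inv_into (carrier G) h y \<in> carrier G"
        by (simp add: * cl that)
      show "h (inv_into (carrier G) h x \<otimes>\<^bsub>G\<^esub> inv_into (carrier G) h y) = x \<otimes>\<^bsub>H\<^esub> y"
        using h bij_betw_inv_into_right [of h] unfolding hom_def by (simp add: "*" that)
    qed
  qed
  then have "inv_into (carrier G) h \<in> iso H G"
    by (simp add: iso_def HG)
  thus ?thesis by (rule is_isoI)
qed

lemma dih_iso:
  fixes z \<rho> :: "'a::field" and G :: "'a mat2 monoid"
  assumes m: "0 < m" and z: "z^m = 1" and prim: "\<And>k. 0 < k \<Longrightarrow> k < m \<Longrightarrow> z^k \<noteq> 1"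
    and \<rho>: "\<rho> \<noteq> 0"
    and car: "carrier G = {(a,b,c,d). (b=0 \<and> c=0 \<and> a*d=1 \<and> a^m=1) \<or> (a=0 \<and> d=0 \<and> b*c=1 \<and> b^m = \<rho>^m)}"
    and mul: "monoid.mult G = mat2_mult"
  shows "G \<cong> dihedral_group (2*m)"
proof -
  have z0: "z \<noteq> 0" using z m by (metis power_0_left zero_neq_one neq0_conv)
  define \<phi> where "\<phi> = (\<lambda>(k::nat,s::bool). if s then (0, z^k*\<rho>, inverse (z^k*\<rho>), 0)
                        else (z^k, 0, 0, inverse (z^k)))"
  let ?D = "dihedral_group (2*m)"
  have cD: "carrier ?D = {(k,s). k < m}" by (simp add: dihedral_group_def)
  have mD: "x \<otimes>\<^bsub>?D\<^esub> y = (case x of (k1,s1) \<Rightarrow> case y of (k2,s2) \<Rightarrow>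
          ((if s1 then k1 + m - k2 else k1 + k2) mod m, s1 \<noteq> s2))" for x y
    by (cases x; cases y) (simp add: dihedral_group_def)
  have zadd: "z^((k1 + k2) mod m) = z^k1 * z^k2" for k1 k2
    using pow_mod_eq[OF z] by (simp add: power_add)
  have zsub: "z^((k1 + m - k2) mod m) = z^k1 * inverse (z^k2)" if "k2 < m" for k1 k2
  proof -
    have "z^((k1 + m - k2) mod m) = z^(k1 + m - k2)" using pow_mod_eq[OF z] by simp
    moreover have "z^(k1 + m - k2) * z^k2 = z^k1"
    proof -
      have "z^(k1 + m - k2) * z^k2 = z^(k1 + m)" using that by (simp add: power_add[symmetric])
      also have "\<dots> = z^k1" using z by (simp add: power_add)
      finally show ?thesis .
    qed
    ultimately show ?thesis using z0 by (simp add: field_simps)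
  qed
  have hom: "\<phi> \<in> hom ?D G"
  proof (rule homI)
    fix x assume "x \<in> carrier ?D"
    obtain k s where x: "x = (k,s)" by (cases x) auto
    have zk: "(z^k)^m = 1" by (metis power_mult mult.commute power_one z)
    have zkr: "(z^k*\<rho>)^m = \<rho>^m" using zk by (simp add: power_mult_distrib)
    show "\<phi> x \<in> carrier G" unfolding car x \<phi>_def using z0 \<rho> zk zkr by (auto simp: field_simps)
  next
    fix x y assume x: "x \<in> carrier ?D" and y: "y \<in> carrier ?D"
    obtain k1 s1 where x': "x = (k1,s1)" and k1: "k1 < m" using x cD by auto
    obtain k2 s2 where y': "y = (k2,s2)" and k2: "k2 < m" using y cD by auto
    show "\<phi> (x \<otimes>\<^bsub>?D\<^esub> y) = \<phi> x \<otimes>\<^bsub>G\<^esub> \<phi> y"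
      unfolding mul mD x' y' \<phi>_def
      using z0 \<rho> zadd zsub[OF k2]
      by (cases s1; cases s2) (simp_all add: field_simps)
  qed
  have inj: "inj_on \<phi> (carrier ?D)"
  proof (rule inj_onI)
    fix x y assume x: "x \<in> carrier ?D" and y: "y \<in> carrier ?D" and eq: "\<phi> x = \<phi> y"
    obtain k1 s1 where x': "x = (k1,s1)" and k1: "k1 < m" using x cD by auto
    obtain k2 s2 where y': "y = (k2,s2)" and k2: "k2 < m" using y cD by auto
    have zk: "z^k1 = z^k2 \<Longrightarrow> k1 = k2"
    proof -
      assume e: "z^k1 = z^k2"
      show "k1 = k2"
      proof (rule ccontr)
        assume ne: "k1 \<noteq> k2"
        show False
        proof (cases "k1 < k2")
          case True
          have "z^k2 = z^k1 * z^(k2-k1)" using True by (simp add: power_add[symmetric])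
          hence "z^(k2-k1) = 1" using e z0 by simp
          moreover have "0 < k2 - k1" "k2 - k1 < m" using True k2 by auto
          ultimately show False using prim by blast
        next
          case False
          hence ji: "k2 < k1" using ne by simp
          have "z^k1 = z^k2 * z^(k1-k2)" using ji by (simp add: power_add[symmetric])
          hence "z^(k1-k2) = 1" using e z0 by simp
          moreover have "0 < k1 - k2" "k1 - k2 < m" using ji k1 by auto
          ultimately show False using prim by blast
        qed
      qed
    qed
    show "x = y"
      using eq zk z0 \<rho> unfolding x' y' \<phi>_def
      by (cases s1; cases s2) auto
  qed
  have img: "\<phi> ` carrier ?D = carrier G"
  proof
    show "\<phi> ` carrier ?D \<subseteq> carrier G" using hom by (auto simp: hom_def)
  next
    show "carrier G \<subseteq> \<phi> ` carrier ?D"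
    proof
      fix M assume "M \<in> carrier G"
      then obtain a b c d where M: "M = (a,b,c,d)"
        and cases: "(b=0 \<and> c=0 \<and> a*d=1 \<and> a^m=1) \<or> (a=0 \<and> d=0 \<and> b*c=1 \<and> b^m = \<rho>^m)"
        unfolding car by auto
      show "M \<in> \<phi> ` carrier ?D"
        using cases
      proof
        assume h: "b=0 \<and> c=0 \<and> a*d=1 \<and> a^m=1"
        then obtain k where k: "k < m" "a = z^k" using roots_unity[OF m z prim] by blast
        have "d = inverse a" using h inverse_unique by metis
        hence "M = \<phi> (k, False)" using M h k by (simp add: \<phi>_def)
        thus ?thesis using k cD by auto
      next
        assume h: "a=0 \<and> d=0 \<and> b*c=1 \<and> b^m = \<rho>^m"
        have "(b/\<rho>)^m = 1" using h \<rho> by (simp add: power_divide)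
        then obtain k where k: "k < m" "b/\<rho> = z^k" using roots_unity[OF m z prim] by blast
        have b: "b = z^k*\<rho>" using k \<rho> by (simp add: field_simps)
        have "c = inverse b" using h inverse_unique by metis
        hence "M = \<phi> (k, True)" using M h b by (simp add: \<phi>_def)
        thus ?thesis using k cD by auto
      qed
    qed
  qed
  have "\<phi> \<in> iso ?D G" using hom inj img by (simp add: iso_def bij_betw_def)
  moreover have "x \<otimes>\<^bsub>?D\<^esub> y \<in> carrier ?D" if "x \<in> carrier ?D" "y \<in> carrier ?D" for x y
    using that m unfolding mD cD by (auto split: prod.splits)
  ultimately show ?thesis by (rule iso_sym_closed)
qed

lemma coeffs1:
  fixes a b c d t :: "'a::field"
  assumes "preserves_curve [:0, t, 0, 1, 0, 1:] (a,b,c,d)"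
  shows "b^5*d + b^3*d^3 + b*d^5*t = 0"
    and "5*a*b^4*d + 3*a*b^2*d^3 + a*d^5*t + b^5*c + 3*b^3*c*d^2 + 5*b*c*d^4*t = (a*d-b*c)^2*t"
    and "10*a^2*b^3*d + 3*a^2*b*d^3 + 5*a*b^4*c + 9*a*b^2*c*d^2 + 5*a*c*d^4*t + 3*b^3*c^2*d + 10*b*c^2*d^3*t = 0"
    and "10*a^3*b^2*d + a^3*d^3 + 10*a^2*b^3*c + 9*a^2*b*c*d^2 + 9*a*b^2*c^2*d + 10*a*c^2*d^3*t + b^3*c^3 + 10*b*c^3*d^2*t = (a*d-b*c)^2"
    and "5*a^4*b*d + 10*a^3*b^2*c + 3*a^3*c*d^2 + 9*a^2*b*c^2*d + 3*a*b^2*c^3 + 10*a*c^3*d^2*t + 5*b*c^4*d*t = 0"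
    and "a^5*d + 5*a^4*b*c + 3*a^3*c^2*d + 3*a^2*b*c^3 + 5*a*c^4*d*t + b*c^5*t = (a*d-b*c)^2"
    and "a^5*c + a^3*c^3 + a*c^5*t = 0"
  using assms by (simp_all add: atMost_Suc eval_nat_numeral power_Suc algebra_simps)

lemma coeffs2:
  fixes a b c d t :: "'a::field"
  assumes "preserves_curve [:t, 0, 0, 1, 0, 0, 1:] (a,b,c,d)"
  shows "b^6 + b^3*d^3 + d^6*t = (a*d-b*c)^2*t"
    and "6*a*b^5 + 3*a*b^2*d^3 + 3*b^3*c*d^2 + 6*c*d^5*t = 0"
    and "15*a^2*b^4 + 3*a^2*b*d^3 + 9*a*b^2*c*d^2 + 3*b^3*c^2*d + 15*c^2*d^4*t = 0"
    and "20*a^3*b^3 + a^3*d^3 + 9*a^2*b*c*d^2 + 9*a*b^2*c^2*d + b^3*c^3 + 20*c^3*d^3*t = (a*d-b*c)^2"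
    and "15*a^4*b^2 + 3*a^3*c*d^2 + 9*a^2*b*c^2*d + 3*a*b^2*c^3 + 15*c^4*d^2*t = 0"
    and "6*a^5*b + 3*a^3*c^2*d + 3*a^2*b*c^3 + 6*c^5*d*t = 0"
    and "a^6 + a^3*c^3 + c^6*t = (a*d-b*c)^2"
  using assms by (simp_all add: atMost_Suc eval_nat_numeral power_Suc algebra_simps)

lemma five_three: "(5::'a::field) = 0 \<Longrightarrow> (3::'a) = 0 \<Longrightarrow> False"
proof -
  assume f: "(5::'a) = 0" and t: "(3::'a) = 0"
  have "(1::'a) = 2*5 - 3*3" by simp
  hence "(1::'a) = 0" by (simp only: f t mult_zero_right diff_zero)
  thus False by simp
qed

lemma ten: "(5::'a::field) = 0 \<Longrightarrow> (10::'a) = 0"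
proof -
  assume f: "(5::'a) = 0"
  have "(10::'a) = 2*5" by simp
  thus ?thesis by (simp only: f mult_zero_right)
qed

lemma mono1:
  fixes a b c d t :: "'a::field"
  assumes two: "(2::'a) \<noteq> 0" and t0: "t \<noteq> 0" and t1: "4*t - 1 \<noteq> 0" and t2: "100*t - 9 \<noteq> 0"
    and det: "a*d - b*c \<noteq> 0"
    and P: "preserves_curve [:0, t, 0, 1, 0, 1:] (a,b,c,d)"
  shows "(b = 0 \<and> c = 0) \<or> (a = 0 \<and> d = 0)"
proof -
  note E = coeffs1[OF P]
  show ?thesis
  proof (cases "c = 0")
    case c0: True
    with det have a0: "a \<noteq> 0" and d0: "d \<noteq> 0" by auto
    have "b = 0"
    proof (rule ccontr)
      assume b0: "b \<noteq> 0"
      have "5*(a^4*b*d) = 0" using E(5) c0 by simp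
      with a0 b0 d0 have five: "(5::'a) = 0" by simp
      have "a^2*b*d*(10*b^2 + 3*d^2) = 0" using E(3) c0 by Groebner_Basis.algebra
      with a0 b0 d0 have "10*b^2 + 3*d^2 = 0" by simp
      hence "3*d^2 = 0" using ten[OF five] by simp
      with d0 have "(3::'a) = 0" by simp
      with five show False by (rule five_three)
    qed
    with c0 show ?thesis by simp
  next
    case c0: False
    show ?thesis
    proof (cases "a = 0")
      case a0: True
      with det have b0: "b \<noteq> 0" by auto
      have "d = 0"
      proof (rule ccontr)
        assume d0: "d \<noteq> 0"
        have "5*(b*c^4*d*t) = 0" using E(5) a0 by simp
        with b0 c0 d0 t0 have five: "(5::'a) = 0" by simp
        have "b*c^2*d*(3*b^2 + 10*d^2*t) = 0" using E(3) a0 by Groebner_Basis.algebra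
        with b0 c0 d0 have "3*b^2 + 10*d^2*t = 0" by simp
        hence "3*b^2 = 0" using ten[OF five] by simp
        with b0 have "(3::'a) = 0" by simp
        with five show False by (rule five_three)
      qed
      with a0 show ?thesis by simp
    next
      case a0: False
      have "False"
      proof (cases "d = 0")
        case d0: True
        with det have b0: "b \<noteq> 0" by auto
        have "5*(a*b^4*c) = 0" using E(3) d0 by simp
        with a0 b0 c0 have five: "(5::'a) = 0" by simp
        have "a*b^2*c*(10*a^2 + 3*c^2) = 0" using E(5) d0 by Groebner_Basis.algebra
        with a0 b0 c0 have "10*a^2 + 3*c^2 = 0" by simp
        hence "3*c^2 = 0" using ten[OF five] by simp
        with c0 have "(3::'a) = 0" by simp
        with five show False by (rule five_three)
      next
        case d0: False
        define r where "r = a/c"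
        define l where "l = b/d"
        have a: "a = r*c" using c0 by (simp add: r_def)
        have b: "b = l*d" using d0 by (simp add: l_def)
        have "c^6*(r^5 + r^3 + r*t) = 0" using E(7) unfolding a by Groebner_Basis.algebra
        hence Q6: "r^5 + r^3 + r*t = 0" using c0 by simp
        have "c^4*d^2*(5*r^4*l + 10*r^3*l^2 + 3*r^3 + 9*r^2*l + 3*r*l^2 + 10*r*t + 5*l*t) = 0"
          using E(5) unfolding a b by Groebner_Basis.algebra
        hence Q4: "5*r^4*l + 10*r^3*l^2 + 3*r^3 + 9*r^2*l + 3*r*l^2 + 10*r*t + 5*l*t = 0"
          using c0 d0 by simp
        have "c^2*d^4*(10*r^2*l^3 + 3*r^2*l + 5*r*l^4 + 9*r*l^2 + 5*r*t + 3*l^3 + 10*l*t) = 0"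
          using E(3) unfolding a b by Groebner_Basis.algebra
        hence Q2: "10*r^2*l^3 + 3*r^2*l + 5*r*l^4 + 9*r*l^2 + 5*r*t + 3*l^3 + 10*l*t = 0"
          using c0 d0 by simp
        have "d^6*(l^5 + l^3 + l*t) = 0"
          using E(1) unfolding b by Groebner_Basis.algebra
        hence Q0: "l^5 + l^3 + l*t = 0" using d0 by simp
        have r0: "r \<noteq> 0" using a0 a by auto
        have "a*d - b*c = c*d*(r - l)" unfolding a b by Groebner_Basis.algebra
        hence lr: "l \<noteq> r" using det by auto
        show False by (rule core1[OF r0 lr two t1 t2 Q6 Q4 Q2 Q0])
      qed
      thus ?thesis ..
    qed
  qed
qed

lemma mono2:
  fixes a b c d t :: "'a::field"
  assumes two: "(2::'a) \<noteq> 0" and three: "(3::'a) \<noteq> 0" and t0: "t \<noteq> 0"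
    and t1: "4*t - 1 \<noteq> 0" and t2: "50*t + 1 \<noteq> 0"
    and det: "a*d - b*c \<noteq> 0"
    and P: "preserves_curve [:t, 0, 0, 1, 0, 0, 1:] (a,b,c,d)"
  shows "(b = 0 \<and> c = 0) \<or> (a = 0 \<and> d = 0)"
proof -
  note E = coeffs2[OF P]
  have six: "(6::'a) \<noteq> 0"
  proof -
    have "(2::'a)*3 \<noteq> 0" by (intro nz_mult two three)
    thus ?thesis by simp
  qed
  show ?thesis
  proof (cases "c = 0")
    case c0: True
    with det have a0: "a \<noteq> 0" by auto
    have "6*(a^5*b) = 0" using E(6) c0 by simp
    with six a0 have "b = 0" by simp
    with c0 show ?thesis by simp
  next
    case c0: False
    show ?thesis
    proof (cases "a = 0")
      case a0: True
      have "6*(c^5*d*t) = 0" using E(6) a0 by simp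
      with six c0 t0 have "d = 0" by simp
      with a0 show ?thesis by simp
    next
      case a0: False
      have "False"
      proof (cases "d = 0")
        case d0: True
        with det have b0: "b \<noteq> 0" by auto
        have "3*(a^2*b*(2*a^3 + c^3)) = 0" using E(6) d0 by Groebner_Basis.algebra
        with three a0 b0 have e1: "2*a^3 + c^3 = 0" by simp
        have "3*(a*b^2*(5*a^3 + c^3)) = 0" using E(5) d0 by Groebner_Basis.algebra
        with three a0 b0 have e2: "5*a^3 + c^3 = 0" by simp
        have "3*a^3 = (5*a^3 + c^3) - (2*a^3 + c^3)" by Groebner_Basis.algebra
        with e1 e2 have "3*a^3 = 0" by simp
        with three a0 show False by simp
      next
        case d0: False
        define r where "r = a/c"
        define l where "l = b/d"
        have a: "a = r*c" using c0 by (simp add: r_def)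
        have b: "b = l*d" using d0 by (simp add: l_def)
        have "c^5*d*(6*r^5*l + 3*r^3 + 3*r^2*l + 6*t) = 0"
          using E(6) unfolding a b by Groebner_Basis.algebra
        hence F5: "6*r^5*l + 3*r^3 + 3*r^2*l + 6*t = 0" using c0 d0 by simp
        have "c^4*d^2*(15*r^4*l^2 + 3*r^3 + 9*r^2*l + 3*r*l^2 + 15*t) = 0"
          using E(5) unfolding a b by Groebner_Basis.algebra
        hence F4: "15*r^4*l^2 + 3*r^3 + 9*r^2*l + 3*r*l^2 + 15*t = 0" using c0 d0 by simp
        have "c^2*d^4*(15*r^2*l^4 + 3*r^2*l + 9*r*l^2 + 3*l^3 + 15*t) = 0"
          using E(3) unfolding a b by Groebner_Basis.algebra
        hence F2: "15*r^2*l^4 + 3*r^2*l + 9*r*l^2 + 3*l^3 + 15*t = 0" using c0 d0 by simp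
        have "c*d^5*(6*r*l^5 + 3*r*l^2 + 3*l^3 + 6*t) = 0"
          using E(2) unfolding a b by Groebner_Basis.algebra
        hence F1: "6*r*l^5 + 3*r*l^2 + 3*l^3 + 6*t = 0" using c0 d0 by simp
        have r0: "r \<noteq> 0" using a0 a by auto
        have "a*d - b*c = c*d*(r - l)" unfolding a b by Groebner_Basis.algebra
        hence lr: "l \<noteq> r" using det by auto
        show False by (rule core2[OF r0 lr two three t1 t2 F5 F4 F2 F1])
      qed
      thus ?thesis ..
    qed
  qed
qed

lemma class1:
  fixes a b c d t :: "'a::field"
  assumes two: "(2::'a) \<noteq> 0" and t0: "t \<noteq> 0" and t1: "4*t - 1 \<noteq> 0" and t2: "100*t - 9 \<noteq> 0"
  shows "(a*d - b*c \<noteq> 0 \<and> preserves_curve [:0, t, 0, 1, 0, 1:] (a,b,c,d)) \<longleftrightarrow>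
         ((b=0 \<and> c=0 \<and> a*d=1 \<and> a^4=1) \<or> (a=0 \<and> d=0 \<and> b*c=1 \<and> b^4 = t))"
proof
  assume h: "a*d - b*c \<noteq> 0 \<and> preserves_curve [:0, t, 0, 1, 0, 1:] (a,b,c,d)"
  hence det: "a*d - b*c \<noteq> 0" and P: "preserves_curve [:0, t, 0, 1, 0, 1:] (a,b,c,d)" by auto
  note E = coeffs1[OF P]
  from mono1[OF two t0 t1 t2 det P] show "(b=0 \<and> c=0 \<and> a*d=1 \<and> a^4=1) \<or> (a=0 \<and> d=0 \<and> b*c=1 \<and> b^4 = t)"
  proof
    assume bc: "b = 0 \<and> c = 0"
    hence ad: "a*d \<noteq> 0" using det by simp
    have "(a*d)^2*(a*d - 1) = 0" using E(4) bc by Groebner_Basis.algebra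
    with ad have ad1: "a*d = 1" by simp
    have "(a*d)^2*(a^3 - d) = 0" using E(6) bc by Groebner_Basis.algebra
    with ad have "a^3 - d = 0" by simp
    with ad1 have "a^4 = 1" by Groebner_Basis.algebra
    with ad1 bc show ?thesis by simp
  next
    assume ad: "a = 0 \<and> d = 0"
    hence bc: "b*c \<noteq> 0" using det by simp
    have "(b*c)^2*(b*c - 1) = 0" using E(4) ad by Groebner_Basis.algebra
    with bc have bc1: "b*c = 1" by simp
    have "(b*c)^2*(b^3 - c*t) = 0" using E(2) ad by Groebner_Basis.algebra
    with bc have "b^3 - c*t = 0" by simp
    with bc1 have "b^4 = t" by Groebner_Basis.algebra
    with bc1 ad show ?thesis by simp
  qed
next
  assume "(b=0 \<and> c=0 \<and> a*d=1 \<and> a^4=1) \<or> (a=0 \<and> d=0 \<and> b*c=1 \<and> b^4 = t)"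
  thus "a*d - b*c \<noteq> 0 \<and> preserves_curve [:0, t, 0, 1, 0, 1:] (a,b,c,d)"
  proof
    assume h: "b=0 \<and> c=0 \<and> a*d=1 \<and> a^4=1"
    hence d: "d = a^3" by Groebner_Basis.algebra
    have "preserves_curve [:0, t, 0, 1, 0, 1:] (a,0,0,a^3)" using h
      apply (simp add: atMost_Suc eval_nat_numeral)
      apply (intro conjI disjI2; Groebner_Basis.algebra)
      done
    thus ?thesis using h d by simp
  next
    assume h: "a=0 \<and> d=0 \<and> b*c=1 \<and> b^4 = t"
    have "preserves_curve [:0, t, 0, 1, 0, 1:] (0,b,c,0)" using h
      apply (simp add: atMost_Suc eval_nat_numeral)
      apply (intro conjI disjI2; Groebner_Basis.algebra)
      done
    thus ?thesis using h by auto
  qed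
qed

lemma class2:
  fixes a b c d t :: "'a::field"
  assumes two: "(2::'a) \<noteq> 0" and three: "(3::'a) \<noteq> 0" and t0: "t \<noteq> 0"
    and t1: "4*t - 1 \<noteq> 0" and t2: "50*t + 1 \<noteq> 0"
  shows "(a*d - b*c \<noteq> 0 \<and> preserves_curve [:t, 0, 0, 1, 0, 0, 1:] (a,b,c,d)) \<longleftrightarrow>
         ((b=0 \<and> c=0 \<and> a*d=1 \<and> a^6=1) \<or> (a=0 \<and> d=0 \<and> b*c=1 \<and> b^6 = t))"
proof
  assume h: "a*d - b*c \<noteq> 0 \<and> preserves_curve [:t, 0, 0, 1, 0, 0, 1:] (a,b,c,d)"
  hence det: "a*d - b*c \<noteq> 0" and P: "preserves_curve [:t, 0, 0, 1, 0, 0, 1:] (a,b,c,d)" by auto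
  note E = coeffs2[OF P]
  from mono2[OF two three t0 t1 t2 det P] show "(b=0 \<and> c=0 \<and> a*d=1 \<and> a^6=1) \<or> (a=0 \<and> d=0 \<and> b*c=1 \<and> b^6 = t)"
  proof
    assume bc: "b = 0 \<and> c = 0"
    hence ad: "a*d \<noteq> 0" using det by simp
    have "(a*d)^2*(a*d - 1) = 0" using E(4) bc by Groebner_Basis.algebra
    with ad have ad1: "a*d = 1" by simp
    have "a^6 = (a*d)^2" using E(7) bc by Groebner_Basis.algebra
    with ad1 have "a^6 = 1" by simp
    with ad1 bc show ?thesis by simp
  next
    assume ad: "a = 0 \<and> d = 0"
    hence bc: "b*c \<noteq> 0" using det by simp
    have "(b*c)^2*(b*c - 1) = 0" using E(4) ad by Groebner_Basis.algebra
    with bc have bc1: "b*c = 1" by simp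
    have "b^6 = (b*c)^2*t" using E(1) ad by Groebner_Basis.algebra
    with bc1 have "b^6 = t" by simp
    with bc1 ad show ?thesis by simp
  qed
next
  assume "(b=0 \<and> c=0 \<and> a*d=1 \<and> a^6=1) \<or> (a=0 \<and> d=0 \<and> b*c=1 \<and> b^6 = t)"
  thus "a*d - b*c \<noteq> 0 \<and> preserves_curve [:t, 0, 0, 1, 0, 0, 1:] (a,b,c,d)"
  proof
    assume h: "b=0 \<and> c=0 \<and> a*d=1 \<and> a^6=1"
    hence d: "d = a^5" by Groebner_Basis.algebra
    have "preserves_curve [:t, 0, 0, 1, 0, 0, 1:] (a,0,0,a^5)" using h
      apply (simp add: atMost_Suc eval_nat_numeral)
      apply (intro conjI disjI2; Groebner_Basis.algebra)
      done
    thus ?thesis using h d by simp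
  next
    assume h: "a=0 \<and> d=0 \<and> b*c=1 \<and> b^6 = t"
    have "preserves_curve [:t, 0, 0, 1, 0, 0, 1:] (0,b,c,0)" using h
      apply (simp add: atMost_Suc eval_nat_numeral)
      apply (intro conjI disjI2; Groebner_Basis.algebra)
      done
    thus ?thesis using h by auto
  qed
qed

lemma fermat_ff:
  fixes x :: "'a::{finite,field}"
  assumes "x \<noteq> 0"
  shows "x ^ (CARD('a) - 1) = 1"
proof -
  have c: "card (UNIV - {0::'a}) = CARD('a) - 1" by (simp add: card_Diff_singleton)
  have "(\<Prod>y\<in>UNIV-{0}. x * y) = x ^ (CARD('a) - 1) * \<Prod>(UNIV-{0::'a})"
    by (simp add: prod.distrib c)
  moreover have "(\<Prod>y\<in>UNIV-{0}. x * y) = (\<Prod>y\<in>UNIV-{0::'a}. y)"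
    by (rule prod.reindex_bij_witness[of _ "\<lambda>y. y / x" "\<lambda>y. x * y"]) (use assms in auto)
  moreover have "\<Prod>(UNIV-{0::'a}) \<noteq> 0" by (simp add: prod_zero_iff)
  ultimately show ?thesis by simp
qed

lemma char_prime_dvd:
  fixes p :: nat
  assumes "prime p" and "(of_nat p :: 'a::{finite,field}) = 0"
  shows "p dvd CARD('a)"
proof -
  have "CHAR('a) dvd p" using assms(2) by (simp add: of_nat_eq_0_iff_char_dvd)
  moreover have "CHAR('a) \<noteq> 1" by simp
  moreover have "\<forall>m. m dvd p \<longrightarrow> m = 1 \<or> m = p" using assms(1) by (simp add: prime_nat_iff)
  ultimately have "CHAR('a) = p" by blast
  thus ?thesis using CHAR_dvd_CARD[where 'a='a] by simp
qed

lemma two_nz: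
  assumes "odd CARD('a::{finite,field})"
  shows "(2::'a) \<noteq> 0"
proof
  assume "(2::'a) = 0"
  hence "(of_nat 2 :: 'a) = 0" by simp
  hence "2 dvd CARD('a)" by (rule char_prime_dvd[rotated]) simp
  with assms show False by simp
qed

lemma three_nz:
  assumes "\<not> 3 dvd CARD('a::{finite,field})"
  shows "(3::'a) \<noteq> 0"
proof
  assume "(3::'a) = 0"
  hence "(of_nat 3 :: 'a) = 0" by simp
  hence "3 dvd CARD('a)" by (rule char_prime_dvd[rotated]) simp
  with assms show False by simp
qed

lemma nonroot:
  assumes h: "0 < h" "h < CARD('a::{finite,field}) - 1"
  shows "\<exists>y::'a. y \<noteq> 0 \<and> y^h \<noteq> 1"
proof (rule ccontr)
  assume "\<not> ?thesis"
  hence all: "\<And>y::'a. y \<noteq> 0 \<Longrightarrow> y^h = 1" by blast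
  define p :: "'a poly" where "p = Polynomial.monom 1 h + [:-1:]"
  have pa: "poly p x = x^h - 1" for x by (simp add: p_def poly_monom)
  have dp: "degree p = h" using h unfolding p_def
    by (subst degree_add_eq_left) (simp_all add: degree_monom_eq)
  have p0: "p \<noteq> 0" using dp h by auto
  have "UNIV - {0} \<subseteq> {x. poly p x = 0}" using all by (auto simp: pa)
  hence "card (UNIV - {0::'a}) \<le> card {x. poly p x = 0}"
    by (intro card_mono) (simp_all add: poly_roots_finite[OF p0])
  also have "\<dots> \<le> h" using card_poly_roots_bound[OF p0] dp by simp
  finally show False using h by (simp add: card_Diff_singleton)
qed

lemma card_ge2: "2 \<le> CARD('a::{finite,field})"
proof -
  have "{0::'a, 1} \<subseteq> UNIV" by simp
  hence "card {0::'a, 1} \<le> CARD('a)" by (intro card_mono) simp_all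
  thus ?thesis by simp
qed

lemma sq1: "(u::'a::field)^2 = 1 \<Longrightarrow> (u-1)*(u+1) = 0" by Groebner_Basis.algebra
lemma cube1: "(u::'a::field)^3 = 1 \<Longrightarrow> (u-1)*(u^2+u+1) = 0" by Groebner_Basis.algebra

lemma exists_i:
  assumes "odd CARD('a::{finite,field})" "4 dvd (CARD('a) - 1)"
  shows "\<exists>i::'a. i^2 = -1"
proof -
  obtain k where k: "CARD('a) - 1 = 4*k" using assms(2) by blast
  have "CARD('a) - 1 \<noteq> 0" using card_ge2[where 'a='a] by simp
  hence k0: "0 < k" using k by simp
  obtain y :: 'a where y: "y \<noteq> 0" "y^(2*k) \<noteq> 1"
    using nonroot[where 'a='a, of "2*k"] k k0 by auto
  have "(y^(2*k))^2 = 1" using fermat_ff[OF y(1)] k by (simp add: power_mult[symmetric] mult.commute)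
  hence "(y^(2*k) - 1)*(y^(2*k) + 1) = 0" by (rule sq1)
  with y have "y^(2*k) = -1" by (simp add: eq_neg_iff_add_eq_0)
  hence "(y^k)^2 = -1" by (simp add: power_mult[symmetric] mult.commute)
  thus ?thesis by blast
qed

lemma exists_w:
  assumes "3 dvd (CARD('a::{finite,field}) - 1)"
  shows "\<exists>w::'a. w^2 + w + 1 = 0"
proof -
  obtain k where k: "CARD('a) - 1 = 3*k" using assms by blast
  have "CARD('a) - 1 \<noteq> 0" using card_ge2[where 'a='a] by simp
  hence k0: "0 < k" using k by simp
  obtain y :: 'a where y: "y \<noteq> 0" "y^k \<noteq> 1"
    using nonroot[where 'a='a, of "k"] k k0 by auto
  have "(y^k)^3 = 1" using fermat_ff[OF y(1)] k by (simp add: power_mult[symmetric] mult.commute)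
  hence "(y^k - 1)*((y^k)^2 + y^k + 1) = 0" by (rule cube1)
  with y have "(y^k)^2 + y^k + 1 = 0" by simp
  thus ?thesis by blast
qed

lemma m1: "(1::'a::ring_1) = -1 \<Longrightarrow> (2::'a) = 0"
proof -
  assume "(1::'a) = -1"
  hence "(1::'a) + 1 = 0" by (simp add: eq_neg_iff_add_eq_0)
  thus ?thesis by simp
qed

lemma t_quarter:
  fixes t :: "'a::field"
  assumes "(2::'a) \<noteq> 0" "t \<noteq> 1/4"
  shows "4*t - 1 \<noteq> 0"
proof
  assume h: "4*t - 1 = 0"
  have "(2::'a)*2 \<noteq> 0" by (intro nz_mult assms(1))
  hence four: "(4::'a) \<noteq> 0" by simp
  from h have "t*4 = 1" by (simp add: mult.commute)
  hence "t = 1/4" using four by (simp add: eq_divide_eq)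
  with assms(2) show False by simp
qed

lemma t_100:
  fixes t :: "'a::field"
  assumes "t \<noteq> 9/100"
  shows "100*t - 9 \<noteq> 0"
proof (cases "(100::'a) = 0")
  case True
  show ?thesis
  proof
    assume "100*t - 9 = 0"
    with True have nine: "(9::'a) = 0" by simp
    have "(1::'a) = 100 - 11*9" by simp
    with True nine have "(1::'a) = 0" by simp
    thus False by simp
  qed
next
  case False
  show ?thesis
  proof
    assume "100*t - 9 = 0"
    hence "t*100 = 9" by (simp add: mult.commute)
    hence "t = 9/100" using False by (simp add: eq_divide_eq)
    with assms show False by simp
  qed
qed

lemma t_50:
  fixes t :: "'a::field"
  assumes "t \<noteq> -1/50"
  shows "50*t + 1 \<noteq> 0"
proof (cases "(50::'a) = 0")
  case True
  thus ?thesis by simp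
next
  case False
  show ?thesis
  proof
    assume "50*t + 1 = 0"
    hence "t*50 = -1" by (simp add: eq_neg_iff_add_eq_0 mult.commute)
    hence "t = -1/50" using False eq_divide_eq[of t "-1" "50::'a"] by simp
    with assms show False by simp
  qed
qed

theorem mainTheorem1:
  fixes dummy :: "'a::{finite, field}"
  shows
   "(\<forall>t::'a. odd CARD('a) \<and> t \<noteq> 0 \<and> t \<noteq> 1/4 \<and> t \<noteq> 9/100
        \<and> 4 dvd (CARD('a) - 1) \<and> (\<exists>r::'a. r ^ 4 = t)
      \<longrightarrow> aut_group [:0, t, 0, 1, 0, 1:] \<cong> dihedral_group 8)
  \<and> (\<forall>t::'a. odd CARD('a) \<and> \<not> 3 dvd CARD('a) \<and> t \<noteq> 0 \<and> t \<noteq> 1/4 \<and> t \<noteq> -1/50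
        \<and> 3 dvd (CARD('a) - 1) \<and> (\<exists>r::'a. r ^ 6 = t)
      \<longrightarrow> aut_group [:t, 0, 0, 1, 0, 0, 1:] \<cong> dihedral_group 12)"
proof (intro conjI allI impI)
  fix t :: 'a
  assume H: "odd CARD('a) \<and> t \<noteq> 0 \<and> t \<noteq> 1/4 \<and> t \<noteq> 9/100
        \<and> 4 dvd (CARD('a) - 1) \<and> (\<exists>r::'a. r ^ 4 = t)"
  have two: "(2::'a) \<noteq> 0" using H two_nz by blast
  have t0: "t \<noteq> 0" using H by blast
  have t1: "4*t - 1 \<noteq> 0" using H t_quarter[OF two] by blast
  have t2: "100*t - 9 \<noteq> 0" using H t_100 by blast
  obtain i :: 'a where i: "i^2 = -1" using H exists_i by blast
  obtain r :: 'a where r: "r^4 = t" using H by blast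
  have r0: "r \<noteq> 0" using r t0 by auto
  have car: "carrier (aut_group [:0, t, 0, 1, 0, 1:]) =
     {(a,b,c,d). (b=0 \<and> c=0 \<and> a*d=1 \<and> a^4=1) \<or> (a=0 \<and> d=0 \<and> b*c=1 \<and> b^4 = r^4)}"
  proof (rule Set.set_eqI)
    fix M :: "'a mat2"
    obtain a b c d where M: "M = (a,b,c,d)" by (cases M) auto
    show "M \<in> carrier (aut_group [:0, t, 0, 1, 0, 1:]) \<longleftrightarrow>
      M \<in> {(a,b,c,d). (b=0 \<and> c=0 \<and> a*d=1 \<and> a^4=1) \<or> (a=0 \<and> d=0 \<and> b*c=1 \<and> b^4 = r^4)}"
      using class1[OF two t0 t1 t2, of a d b c] unfolding M r by (simp add: aut_group_def)
  qed
  have z4: "i^4 = 1" using i by Groebner_Basis.algebra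
  have prim: "i^k \<noteq> 1" if "0 < k" "k < 4" for k
  proof -
    have "k = 1 \<or> k = 2 \<or> k = 3" using that by auto
    moreover have "i^1 \<noteq> 1"
    proof
      assume "i^1 = 1"
      hence "i^2 = 1" by simp
      with i have "(1::'a) = -1" by simp
      with two show False using m1 by blast
    qed
    moreover have "i^2 \<noteq> 1"
    proof
      assume "i^2 = 1"
      with i have "(1::'a) = -1" by simp
      with two show False using m1 by blast
    qed
    moreover have "i^3 \<noteq> 1"
    proof
      assume h3: "i^3 = 1"
      have "i^3 + i = i*(i^2+1)" by Groebner_Basis.algebra
      with i have "i^3 = -i" by (simp add: eq_neg_iff_add_eq_0)
      with h3 have "-i = 1" by simp
      hence "i = -1" by (metis minus_minus)
      hence "i^2 = 1" by simp
      with i have "(1::'a) = -1" by simp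
      with two show False using m1 by blast
    qed
    ultimately show ?thesis by auto
  qed
  have "aut_group [:0, t, 0, 1, 0, 1:] \<cong> dihedral_group (2*4)"
    by (rule dih_iso[OF _ z4 prim r0 car]) (simp_all add: aut_group_def)
  thus "aut_group [:0, t, 0, 1, 0, 1:] \<cong> dihedral_group 8" by simp
next
  fix t :: 'a
  assume H: "odd CARD('a) \<and> \<not> 3 dvd CARD('a) \<and> t \<noteq> 0 \<and> t \<noteq> 1/4 \<and> t \<noteq> -1/50
        \<and> 3 dvd (CARD('a) - 1) \<and> (\<exists>r::'a. r ^ 6 = t)"
  have two: "(2::'a) \<noteq> 0" using H two_nz by blast
  have three: "(3::'a) \<noteq> 0" using H three_nz by blast
  have t0: "t \<noteq> 0" using H by blast
  have t1: "4*t - 1 \<noteq> 0" using H t_quarter[OF two] by blast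
  have t2: "50*t + 1 \<noteq> 0" using H t_50 by blast
  obtain w :: 'a where w: "w^2 + w + 1 = 0" using H exists_w by blast
  define z where "z = - w"
  have zq: "z^2 - z + 1 = 0" using w unfolding z_def by Groebner_Basis.algebra
  obtain r :: 'a where r: "r^6 = t" using H by blast
  have r0: "r \<noteq> 0" using r t0 by auto
  have car: "carrier (aut_group [:t, 0, 0, 1, 0, 0, 1:]) =
     {(a,b,c,d). (b=0 \<and> c=0 \<and> a*d=1 \<and> a^6=1) \<or> (a=0 \<and> d=0 \<and> b*c=1 \<and> b^6 = r^6)}"
  proof (rule Set.set_eqI)
    fix M :: "'a mat2"
    obtain a b c d where M: "M = (a,b,c,d)" by (cases M) auto
    show "M \<in> carrier (aut_group [:t, 0, 0, 1, 0, 0, 1:]) \<longleftrightarrow>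
      M \<in> {(a,b,c,d). (b=0 \<and> c=0 \<and> a*d=1 \<and> a^6=1) \<or> (a=0 \<and> d=0 \<and> b*c=1 \<and> b^6 = r^6)}"
      using class2[OF two three t0 t1 t2, of a d b c] unfolding M r by (simp add: aut_group_def)
  qed
  have z6: "z^6 = 1" using zq by Groebner_Basis.algebra
  have prim: "z^k \<noteq> 1" if "0 < k" "k < 6" for k
  proof -
    have "k = 1 \<or> k = 2 \<or> k = 3 \<or> k = 4 \<or> k = 5" using that by auto
    moreover have "z^1 \<noteq> 1"
    proof
      assume "z^1 = 1"
      with zq show False by simp
    qed
    moreover have "z^2 \<noteq> 1"
    proof
      assume h: "z^2 = 1"
      have "z - 2 = (z^2 - 1) - (z^2 - z + 1)" by Groebner_Basis.algebra
      with h zq have "z = 2" by simp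
      with zq have "(3::'a) = 0" by simp
      with three show False by simp
    qed
    moreover have "z^3 \<noteq> 1"
    proof
      assume h: "z^3 = 1"
      have "z^3 + 1 = (z+1)*(z^2 - z + 1)" by Groebner_Basis.algebra
      with h zq have "(1::'a) + 1 = 0" by simp
      hence "(2::'a) = 0" by simp
      with two show False by simp
    qed
    moreover have "z^4 \<noteq> 1"
    proof
      assume h: "z^4 = 1"
      have "z^4 + z = z*(z+1)*(z^2 - z + 1)" by Groebner_Basis.algebra
      with h zq have "1 + z = 0" by simp
      hence "z = -1" by (simp add: eq_neg_iff_add_eq_0 add.commute)
      with zq have "(3::'a) = 0" by simp
      with three show False by simp
    qed
    moreover have "z^5 \<noteq> 1"
    proof
      assume h: "z^5 = 1"
      have "z^5 + z^2 = z^2*(z+1)*(z^2 - z + 1)" by Groebner_Basis.algebra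
      with h zq have e: "1 + z^2 = 0" by simp
      have "z = (1 + z^2) - (z^2 - z + 1)" by Groebner_Basis.algebra
      with e zq have "z = 0" by simp
      with h show False by simp
    qed
    ultimately show ?thesis by auto
  qed
  have "aut_group [:t, 0, 0, 1, 0, 0, 1:] \<cong> dihedral_group (2*6)"
    by (rule dih_iso[OF _ z6 prim r0 car]) (simp_all add: aut_group_def)
  thus "aut_group [:t, 0, 0, 1, 0, 0, 1:] \<cong> dihedral_group 12" by simp
qed

end
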